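(* Let $d\geqslant1$, let $F$ be a finite abelian group and $G=\mathbb{Z}^d\times F$. Let $A$ be a nonempty subset of $\mathbb{Z}^d$ which has a minimal complement in $\mathbb{Z}^d$. Then for every nonempty subset $H\subseteq F$, the set $A\times H$ has a minimal complement in $G$.
   Context: A nonempty $M$ is a complement of $W$ in an abelian group $G$ if $W+M=G$; it is a minimal complement if no proper subset of $M$ is a complement of $W$. *)

theory Defs
  imports "HOL-Analysis.Analysis"
begin

definition sumset :: "'a::ab_group_add set \<Rightarrow> 'a set \<Rightarrow> 'a set" where
  "sumset W M = {w + m | w m. w \<in> W \<and> m \<in> M}"

definition is_complement :: "'a::ab_group_add set \<Rightarrow> 'a set \<Rightarrow> bool" where
  "is_complement W M \<longleftrightarrow> M \<noteq> {} \<and> sumset W M = UNIV"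

definition is_minimal_complement :: "'a::ab_group_add set \<Rightarrow> 'a set \<Rightarrow> bool" where
  "is_minimal_complement W M \<longleftrightarrow>
     is_complement W M \<and> (\<forall>M'. M' \<subset> M \<longrightarrow> \<not> is_complement W M')"

definition has_minimal_complement :: "'a::ab_group_add set \<Rightarrow> bool" where
  "has_minimal_complement W \<longleftrightarrow> (\<exists>M. is_minimal_complement W M)"

end

theory Submission
  imports Defs
begin

lemma unique_witness:
  assumes "is_minimal_complement A M" "m \<in> M"
  shows "\<exists>x. x \<in> sumset A {m} \<and> x \<notin> sumset A (M - {m})"
proof -
  have "M - {m} \<subset> M" using assms(2) by blast
  hence "\<not> is_complement A (M - {m})" using assms(1) unfolding is_minimal_complement_def by blast
  hence "sumset A (M - {m}) \<noteq> UNIV"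
    unfolding is_complement_def sumset_def by auto
  then obtain x where x: "x \<notin> sumset A (M - {m})" by blast
  have "x \<in> sumset A M" using assms(1) unfolding is_minimal_complement_def is_complement_def by auto
  then show ?thesis using x unfolding sumset_def by blast
qed

lemma prod_min:
  fixes A M :: "'a::ab_group_add set" and H N :: "'b::ab_group_add set"
  assumes "is_minimal_complement A M" "is_minimal_complement H N"
  shows "is_minimal_complement (A \<times> H) (M \<times> N)"
proof -
  have cM: "M \<noteq> {}" "sumset A M = UNIV" and cN: "N \<noteq> {}" "sumset H N = UNIV"
    using assms unfolding is_minimal_complement_def is_complement_def by auto
  have c: "is_complement (A \<times> H) (M \<times> N)"
    unfolding is_complement_def
  proof
    show "M \<times> N \<noteq> {}" using cM cN by auto
    show "sumset (A \<times> H) (M \<times> N) = UNIV"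
    proof (rule set_eqI, rule iffI)
      fix z :: "'a \<times> 'b"
      obtain x y where z: "z = (x, y)" by force
      have "x \<in> sumset A M" "y \<in> sumset H N" using cM cN by auto
      then obtain a m h n where "a \<in> A" "m \<in> M" "x = a + m" "h \<in> H" "n \<in> N" "y = h + n"
        unfolding sumset_def by blast
      then show "z \<in> sumset (A \<times> H) (M \<times> N)" unfolding sumset_def z
        by (intro CollectI exI[of _ "(a,h)"] exI[of _ "(m,n)"]) auto
    qed auto
  qed
  have "\<not> is_complement (A \<times> H) M'" if "M' \<subset> M \<times> N" for M'
  proof
    assume M': "is_complement (A \<times> H) M'"
    obtain m n where mn: "m \<in> M" "n \<in> N" "(m, n) \<notin> M'" using \<open>M' \<subset> M \<times> N\<close> by auto
    obtain x where x: "x \<in> sumset A {m}" "x \<notin> sumset A (M - {m})"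
      using unique_witness[OF assms(1) mn(1)] by blast
    obtain y where y: "y \<in> sumset H {n}" "y \<notin> sumset H (N - {n})"
      using unique_witness[OF assms(2) mn(2)] by blast
    have "(x, y) \<in> sumset (A \<times> H) M'" using M' unfolding is_complement_def by auto
    then obtain a h m' n' where ah: "a \<in> A" "h \<in> H" "(m', n') \<in> M'" "(x, y) = (a, h) + (m', n')"
      unfolding sumset_def by force
    have "m' \<in> M" "n' \<in> N" using ah(3) \<open>M' \<subset> M \<times> N\<close> by auto
    have "m' = m"
    proof (rule ccontr)
      assume "m' \<noteq> m"
      hence "x \<in> sumset A (M - {m})" using ah \<open>m' \<in> M\<close> unfolding sumset_def by auto
      thus False using x by blast
    qed
    moreover have "n' = n"
    proof (rule ccontr)
      assume "n' \<noteq> n"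
      hence "y \<in> sumset H (N - {n})" using ah \<open>n' \<in> N\<close> unfolding sumset_def by auto
      thus False using y by blast
    qed
    ultimately show False using ah(3) mn(3) by simp
  qed
  thus ?thesis using c unfolding is_minimal_complement_def by blast
qed

lemma finite_has_min:
  fixes H :: "('f::{ab_group_add, finite}) set"
  assumes "H \<noteq> {}"
  shows "has_minimal_complement H"
proof -
  obtain h where h: "h \<in> H" using assms by blast
  have "is_complement H UNIV"
    unfolding is_complement_def sumset_def
  proof (intro conjI)
    show "{w + m |w m. w \<in> H \<and> m \<in> UNIV} = UNIV"
    proof (rule set_eqI)
      fix z :: 'f
      have "z = h + (z - h)" by simp
      thus "z \<in> {w + m |w m. w \<in> H \<and> m \<in> UNIV} \<longleftrightarrow> z \<in> UNIV" using h by blast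
    qed
  qed simp
  then obtain N where N: "is_complement H N" and minN: "\<And>N'. is_complement H N' \<Longrightarrow> card N \<le> card N'"
    using ex_has_least_nat[of "\<lambda>N. is_complement H N" UNIV card] by blast
  have "\<not> is_complement H N'" if "N' \<subset> N" for N'
  proof
    assume "is_complement H N'"
    hence "card N \<le> card N'" by (rule minN)
    moreover have "card N' < card N" using psubset_card_mono[OF finite that] .
    ultimately show False by simp
  qed
  thus ?thesis using N unfolding has_minimal_complement_def is_minimal_complement_def by blast
qed

theorem lemma5p5:
  fixes A :: "(int ^ 'd) set" and H :: "('f::{ab_group_add, finite}) set"
  assumes "A \<noteq> {}"
    and "has_minimal_complement A"
    and "H \<noteq> {}"
  shows "has_minimal_complement (A \<times> H)"
proof -
  obtain M where M: "is_minimal_complement A M" using assms(2) unfolding has_minimal_complement_def by blast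
  obtain N where N: "is_minimal_complement H N" using finite_has_min[OF assms(3)] unfolding has_minimal_complement_def by blast
  show ?thesis using prod_min[OF M N] unfolding has_minimal_complement_def by blast
qed

end
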